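(* Let $g(x;\theta)$ be a family of densities in the class $\mathcal{G}$ with $g(x;0)=\alpha x^{-\alpha-1}$, and let $h(x)=\frac{\partial}{\partial\theta}g(x;\theta)\big|_{\theta=0}$. Then $$b_T(\theta)=3\theta\int_1^\infty \upsilon(x)h(x)\,dx+o(\theta),\quad\theta\to0.$$
   Context: Let $X_1,\dots,X_n$ be i.i.d. on $[1,\infty)$, $F_n$ the empirical distribution function, $M_n(t)=\binom{n}{2}^{-1}\sum_{1\le i<j\le n} I\{\max(X_i/X_j,X_j/X_i)\le t\}$, $t\ge1$, and $T_n=\int_1^\infty (M_n(t)-F_n(t))\,dF_n(t)$. $\mathcal{G}$ is a class of families of densities $g(x;\theta)$ on $[1,\infty)$, $\theta$ in a neighbourhood of $0$, with $g(x;0)$ a Pareto density $\alpha x^{-\alpha-1}$ ($\alpha>0$), such that differentiation in $\theta$ under the integral sign is permitted in all integrals appearing. $b_T(\theta)$ is the limit in probability of $T_n$ when the sample has density $g(\cdot;\theta)$; equivalently $b_T(\theta)=P\{\max(X/Y,Y/X)\le Z\}-\frac12$ for $X,Y,Z$ i.i.d. with density $g(\cdot;\theta)$. Here $\upsilon(s)=\frac23\frac{\alpha\ln s}{s^\alpha}-\frac16$, $s\ge1$. *)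

theory Defs
  imports "HOL-Probability.Probability" "HOL-Library.Landau_Symbols"
begin

definition pareto_dens :: "real \<Rightarrow> real \<Rightarrow> real" where
  "pareto_dens \<alpha> x = \<alpha> * x powr (- \<alpha> - 1)"

definition upsilon :: "real \<Rightarrow> real \<Rightarrow> real" where
  "upsilon \<alpha> s = 2/3 * (\<alpha> * ln s / s powr \<alpha>) - 1/6"

definition kernT :: "real \<Rightarrow> real \<Rightarrow> real \<Rightarrow> real" where
  "kernT x y z = (if max (x / y) (y / x) \<le> z then 1 else 0)"

text \<open>b_T(theta) = P{max(X/Y,Y/X) <= Z} - 1/2 for X,Y,Z iid with density g(.;theta)
  on [1,\<infinity>); here g \<theta> x stands for g(x;\<theta>).\<close>
definition bT :: "(real \<Rightarrow> real \<Rightarrow> real) \<Rightarrow> real \<Rightarrow> real" where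
  "bT g \<theta> = (LINT x:{1..}|lborel. LINT y:{1..}|lborel. LINT z:{1..}|lborel.
      kernT x y z * g \<theta> x * g \<theta> y * g \<theta> z) - 1/2"

end

theory Submission
  imports Defs
begin

lemma pint:
  fixes \<beta> t :: real
  assumes b: "\<beta> > 0" and t: "t > 0"
  shows "set_integrable lborel {t..} (\<lambda>z. z powr (-\<beta>-1))"
    "(LINT z:{t..}|lborel. z powr (-\<beta>-1)) = t powr (-\<beta>) / \<beta>"
proof -
  have hi: "((\<lambda>z. z powr (-\<beta>-1)) has_integral -(t powr (-\<beta>-1+1)) / (-\<beta>-1+1)) {t..}"
    by (rule has_integral_powr_to_inf) (use b t in auto)
  have e: "-(t powr (-\<beta>-1+1)) / (-\<beta>-1+1) = t powr (-\<beta>) / \<beta>" by simp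
  have io: "(\<lambda>z. z powr (-\<beta>-1)) integrable_on {t..}" using hi by (auto simp: integrable_on_def)
  have "(\<lambda>z. z powr (-\<beta>-1)) absolutely_integrable_on {t..}"
    by (rule nonnegative_absolutely_integrable_1[OF io]) auto
  then show si: "set_integrable lborel {t..} (\<lambda>z. z powr (-\<beta>-1))"
  proof -
    have m: "(\<lambda>x. indicator {t..} x *\<^sub>R x powr (-\<beta>-1)) \<in> borel_measurable lborel" by measurable
    show ?thesis using \<open>_ absolutely_integrable_on _\<close> integrable_completion[OF m]
      unfolding set_integrable_def by simp
  qed
  show "(LINT z:{t..}|lborel. z powr (-\<beta>-1)) = t powr (-\<beta>) / \<beta>"
    using set_borel_integral_eq_integral(2)[OF si] hi e integral_unique by metis
qed

lemma swap:
  fixes f g :: "real \<Rightarrow> real" and k :: "real \<Rightarrow> real \<Rightarrow> real"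
  assumes f: "set_integrable lborel {1..} f" and g: "set_integrable lborel {1..} g"
    and k: "(\<lambda>(x,y). k x y) \<in> borel_measurable (lborel \<Otimes>\<^sub>M lborel)"
    and kb: "\<And>x y. 1 \<le> x \<Longrightarrow> 1 \<le> y \<Longrightarrow> \<bar>k x y\<bar> \<le> 1"
  shows "set_integrable lborel {1..} (\<lambda>x. f x * (LINT y:{1..}|lborel. g y * k x y))"
    "set_integrable lborel {1..} (\<lambda>y. g y * (LINT x:{1..}|lborel. f x * k x y))"
    "(LINT x:{1..}|lborel. f x * (LINT y:{1..}|lborel. g y * k x y))
      = (LINT y:{1..}|lborel. g y * (LINT x:{1..}|lborel. f x * k x y))"
proof -
  define F where "F x = indicator {1..} x * f x" for x :: real
  define G where "G x = indicator {1..} x * g x" for x :: real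
  have iF: "integrable lborel F" using f unfolding set_integrable_def F_def by simp
  have iG: "integrable lborel G" using g unfolding set_integrable_def G_def by simp
  have [measurable]: "F \<in> borel_measurable lborel" "G \<in> borel_measurable lborel"
    using iF iG by auto
  have [measurable]: "(\<lambda>(x,y). k x y) \<in> borel_measurable (lborel \<Otimes>\<^sub>M lborel)" by (rule k)
  have iP: "integrable (lborel \<Otimes>\<^sub>M lborel) (\<lambda>(x,y). \<bar>F x\<bar> * \<bar>G y\<bar>)"
  proof (rule lborel_pair.Fubini_integrable)
    show "(\<lambda>(x,y). \<bar>F x\<bar> * \<bar>G y\<bar>) \<in> borel_measurable (lborel \<Otimes>\<^sub>M lborel)" by measurable
    show "integrable lborel (\<lambda>x. \<integral>y. norm (case (x, y) of (x, y) \<Rightarrow> \<bar>F x\<bar> * \<bar>G y\<bar>) \<partial>lborel)"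
      using iF iG by (simp add: abs_mult)
    show "AE x in lborel. integrable lborel (\<lambda>y. case (x, y) of (x, y) \<Rightarrow> \<bar>F x\<bar> * \<bar>G y\<bar>)"
      using iG by simp
  qed
  have iK: "integrable (lborel \<Otimes>\<^sub>M lborel) (\<lambda>(x,y). F x * G y * k x y)"
  proof (rule Bochner_Integration.integrable_bound[OF iP])
    show "(\<lambda>(x,y). F x * G y * k x y) \<in> borel_measurable (lborel \<Otimes>\<^sub>M lborel)" by measurable
    show "AE xy in lborel \<Otimes>\<^sub>M lborel. norm (case xy of (x,y) \<Rightarrow> F x * G y * k x y) \<le> norm (case xy of (x,y) \<Rightarrow> \<bar>F x\<bar> * \<bar>G y\<bar>)"
    proof (rule AE_I2, clarify)
      fix x y
      show "norm (F x * G y * k x y) \<le> norm (\<bar>F x\<bar> * \<bar>G y\<bar>)"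
      proof (cases "1 \<le> x \<and> 1 \<le> y")
        case True
        then have "\<bar>k x y\<bar> \<le> 1" by (intro kb) auto
        then show ?thesis by (simp add: abs_mult mult_left_le)
      next
        case False
        then show ?thesis by (auto simp: F_def G_def)
      qed
    qed
  qed
  have e1: "(\<lambda>x. indicator {1..} x * (f x * (LINT y:{1..}|lborel. g y * k x y)))
     = (\<lambda>x. \<integral>y. F x * G y * k x y \<partial>lborel)"
  proof
    fix x
    have "indicator {1..} x * (f x * (LINT y:{1..}|lborel. g y * k x y)) = F x * (\<integral>y. G y * k x y \<partial>lborel)"
      by (simp add: F_def G_def set_lebesgue_integral_def mult.assoc)
    also have "\<dots> = (\<integral>y. F x * G y * k x y \<partial>lborel)"
      by (simp add: mult.assoc)
    finally show "indicator {1..} x * (f x * (LINT y:{1..}|lborel. g y * k x y)) = (\<integral>y. F x * G y * k x y \<partial>lborel)" .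
  qed
  have e2: "(\<lambda>y. indicator {1..} y * (g y * (LINT x:{1..}|lborel. f x * k x y)))
     = (\<lambda>y. \<integral>x. F x * G y * k x y \<partial>lborel)"
  proof
    fix y
    have "indicator {1..} y * (g y * (LINT x:{1..}|lborel. f x * k x y)) = G y * (\<integral>x. F x * k x y \<partial>lborel)"
      by (simp add: F_def G_def set_lebesgue_integral_def mult.assoc)
    also have "\<dots> = (\<integral>x. G y * (F x * k x y) \<partial>lborel)"
      by simp
    also have "\<dots> = (\<integral>x. F x * G y * k x y \<partial>lborel)"
      by (simp only: mult.assoc mult.left_commute)
    finally show "indicator {1..} y * (g y * (LINT x:{1..}|lborel. f x * k x y)) = (\<integral>x. F x * G y * k x y \<partial>lborel)" .
  qed
  show "set_integrable lborel {1..} (\<lambda>x. f x * (LINT y:{1..}|lborel. g y * k x y))"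
    unfolding set_integrable_def using lborel_pair.integrable_fst[OF iK] e1 by simp
  show "set_integrable lborel {1..} (\<lambda>y. g y * (LINT x:{1..}|lborel. f x * k x y))"
    unfolding set_integrable_def using lborel_pair.integrable_snd[OF iK] e2 by simp
  show "(LINT x:{1..}|lborel. f x * (LINT y:{1..}|lborel. g y * k x y))
      = (LINT y:{1..}|lborel. g y * (LINT x:{1..}|lborel. f x * k x y))"
  proof -
    have "(LINT x:{1..}|lborel. f x * (LINT y:{1..}|lborel. g y * k x y))
      = (\<integral>x. indicator {1..} x *\<^sub>R (f x * (LINT y:{1..}|lborel. g y * k x y)) \<partial>lborel)"
      unfolding set_lebesgue_integral_def[of lborel "{1..}" "\<lambda>x. f x * (LINT y:{1..}|lborel. g y * k x y)"] ..
    also have "\<dots> = (\<integral>x. (\<integral>y. F x * G y * k x y \<partial>lborel) \<partial>lborel)"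
      by (simp only: real_scaleR_def e1)
    also have "\<dots> = (\<integral>y. (\<integral>x. F x * G y * k x y \<partial>lborel) \<partial>lborel)"
      using lborel_pair.Fubini_integral[OF iK] by simp
    also have "\<dots> = (\<integral>y. indicator {1..} y *\<^sub>R (g y * (LINT x:{1..}|lborel. f x * k x y)) \<partial>lborel)"
      by (simp only: real_scaleR_def e2)
    also have "\<dots> = (LINT y:{1..}|lborel. g y * (LINT x:{1..}|lborel. f x * k x y))"
      unfolding set_lebesgue_integral_def[of lborel "{1..}" "\<lambda>y. g y * (LINT x:{1..}|lborel. f x * k x y)"] ..
    finally show ?thesis .
  qed
qed


lemma ftc_fin:
  fixes F f :: "real \<Rightarrow> real"
  assumes ab: "a \<le> b"
    and F: "\<And>t. a \<le> t \<Longrightarrow> t \<le> b \<Longrightarrow> (F has_real_derivative f t) (at t)"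
    and f: "continuous_on {a..b} f"
  shows "set_integrable lborel {a..b} f" "(LINT t:{a..b}|lborel. f t) = F b - F a"
proof -
  show "set_integrable lborel {a..b} f" by (rule borel_integrable_atLeastAtMost'[OF f])
  have "integral\<^sup>L lborel (\<lambda>x. indicator {a .. b} x *\<^sub>R f x) = F b - F a"
    by (rule integral_FTC_atLeastAtMost[OF ab _ f])
       (use F in \<open>auto simp: has_real_derivative_iff_has_vector_derivative intro: has_vector_derivative_at_within\<close>)
  then show "(LINT t:{a..b}|lborel. f t) = F b - F a" by (simp add: set_lebesgue_integral_def)
qed

lemma sub_tail:
  fixes f :: "real \<Rightarrow> real"
  assumes "1 \<le> t"
  shows "(LINT z:{1..}|lborel. indicator {t..} z * f z) = (LINT z:{t..}|lborel. f z)"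
    "set_integrable lborel {1..} (\<lambda>z. indicator {t..} z * f z) = set_integrable lborel {t..} f"
proof -
  have e: "(\<lambda>z. indicator {1..} z *\<^sub>R (indicator {t..} z * f z)) = (\<lambda>z. indicator {t..} z *\<^sub>R f z)"
    using assms by (auto simp: indicator_def)
  show "(LINT z:{1..}|lborel. indicator {t..} z * f z) = (LINT z:{t..}|lborel. f z)"
    unfolding set_lebesgue_integral_def e ..
  show "set_integrable lborel {1..} (\<lambda>z. indicator {t..} z * f z) = set_integrable lborel {t..} f"
    unfolding set_integrable_def e ..
qed

lemma sub_fin:
  fixes f :: "real \<Rightarrow> real"
  assumes "1 \<le> a"
  shows "(LINT z:{1..}|lborel. indicator {a..b} z * f z) = (LINT z:{a..b}|lborel. f z)"
    "set_integrable lborel {1..} (\<lambda>z. indicator {a..b} z * f z) = set_integrable lborel {a..b} f"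
proof -
  have e: "(\<lambda>z. indicator {1..} z *\<^sub>R (indicator {a..b} z * f z)) = (\<lambda>z. indicator {a..b} z *\<^sub>R f z)"
    using assms by (auto simp: indicator_def)
  show "(LINT z:{1..}|lborel. indicator {a..b} z * f z) = (LINT z:{a..b}|lborel. f z)"
    unfolding set_lebesgue_integral_def e ..
  show "set_integrable lborel {1..} (\<lambda>z. indicator {a..b} z * f z) = set_integrable lborel {a..b} f"
    unfolding set_integrable_def e ..
qed

lemma split_int:
  fixes f :: "real \<Rightarrow> real"
  assumes "1 \<le> x" "set_integrable lborel {1..x} f" "set_integrable lborel {x..} f"
  shows "set_integrable lborel {1..} f"
    "(LINT y:{1..}|lborel. f y) = (LINT y:{1..x}|lborel. f y) + (LINT y:{x..}|lborel. f y)"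
proof -
  have U: "{1..} = {1..x} \<union> {x..}" using assms(1) by auto
  show "set_integrable lborel {1..} f" unfolding U using assms(2,3) by (rule set_integrable_Un) auto
  have ae: "AE y in lborel. \<not> (y \<in> {1..x} \<and> y \<in> {x..})"
    using AE_lborel_singleton[of x] by eventually_elim auto
  show "(LINT y:{1..}|lborel. f y) = (LINT y:{1..x}|lborel. f y) + (LINT y:{x..}|lborel. f y)"
    unfolding U by (rule set_integral_Un_AE[OF ae _ _ assms(2,3)]) auto
qed

definition Qf :: "real \<Rightarrow> real \<Rightarrow> real \<Rightarrow> real" where
  "Qf a x y = min (x/y) (y/x) powr a"
definition Af :: "real \<Rightarrow> real \<Rightarrow> real" where
  "Af a x = a * x powr (-a) * ln x + x powr (-a) / 2"
definition Wf :: "real \<Rightarrow> real \<Rightarrow> real \<Rightarrow> real" where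
  "Wf a x z = max 1 (x/z) powr (-a) - (x*z) powr (-a)"

context
  fixes \<alpha> :: real
  assumes apos: "\<alpha> > 0"
begin

lemma ptail:
  assumes "t > 0"
  shows "set_integrable lborel {t..} (pareto_dens \<alpha>)" "(LINT z:{t..}|lborel. pareto_dens \<alpha> z) = t powr (-\<alpha>)"
proof -
  have "set_integrable lborel {t..} (\<lambda>z. \<alpha> * z powr (-\<alpha>-1))" using pint[OF apos assms] by simp
  then show "set_integrable lborel {t..} (pareto_dens \<alpha>)" by (simp add: pareto_dens_def[abs_def])
  show "(LINT z:{t..}|lborel. pareto_dens \<alpha> z) = t powr (-\<alpha>)"
    using pint[OF apos assms] apos by (simp add: pareto_dens_def)
qed

lemma ptail2:
  assumes "t > 0"
  shows "set_integrable lborel {t..} (\<lambda>z. \<alpha> * z powr (-(2*\<alpha>)-1))"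
    "(LINT z:{t..}|lborel. \<alpha> * z powr (-(2*\<alpha>)-1)) = t powr (-(2*\<alpha>)) / 2"
proof -
  have b: "2*\<alpha> > 0" using apos by simp
  show "set_integrable lborel {t..} (\<lambda>z. \<alpha> * z powr (-(2*\<alpha>)-1))"
    using pint(1)[OF b assms] by simp
  show "(LINT z:{t..}|lborel. \<alpha> * z powr (-(2*\<alpha>)-1)) = t powr (-(2*\<alpha>)) / 2"
    using pint(2)[OF b assms] apos by simp
qed

lemma minmax0: 
  fixes x y :: real assumes "1 \<le> x" "1 \<le> y"
  shows "1 \<le> max (x/y) (y/x) \<and> min (x/y) (y/x) = 1 / max (x/y) (y/x) \<and> min (x/y) (y/x) \<le> 1
    \<and> 0 < min (x/y) (y/x)"
proof (cases "y \<le> x")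
  case True
  have a: "y/x \<le> 1" "1 \<le> x/y" using True assms by (simp_all add: divide_le_eq_1_pos le_divide_eq_1_pos)
  have e: "min (x/y) (y/x) = y/x" "max (x/y) (y/x) = x/y" using a by auto
  show ?thesis unfolding e using a assms by simp
next
  case False
  have a: "x/y \<le> 1" "1 \<le> y/x" using False assms by (simp_all add: divide_le_eq_1_pos le_divide_eq_1_pos)
  have e: "min (x/y) (y/x) = x/y" "max (x/y) (y/x) = y/x" using a by auto
  show ?thesis unfolding e using a assms by simp
qed
lemmas minmax = minmax0[THEN conjunct1] minmax0[THEN conjunct2, THEN conjunct1]
  minmax0[THEN conjunct2, THEN conjunct2, THEN conjunct1] minmax0[THEN conjunct2, THEN conjunct2, THEN conjunct2]

lemma Q_eq:
  assumes x: "1 \<le> x" and y: "1 \<le> y"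
  shows "set_integrable lborel {1..} (\<lambda>z. kernT x y z * pareto_dens \<alpha> z)"
    "(LINT z:{1..}|lborel. kernT x y z * pareto_dens \<alpha> z) = Qf \<alpha> x y"
proof -
  define m where "m = max (x/y) (y/x)"
  have m1: "1 \<le> m" using minmax[OF x y] by (simp add: m_def)
  have k: "kernT x y z = indicator {m..} z" for z by (simp add: kernT_def m_def indicator_def)
  show "set_integrable lborel {1..} (\<lambda>z. kernT x y z * pareto_dens \<alpha> z)"
    unfolding k sub_tail(2)[OF m1] using ptail m1 by simp
  have "(LINT z:{1..}|lborel. kernT x y z * pareto_dens \<alpha> z) = m powr (-\<alpha>)"
    unfolding k sub_tail(1)[OF m1] using ptail m1 by simp
  also have "\<dots> = Qf \<alpha> x y"
  proof -
    have "min (x/y) (y/x) = 1 / m" using minmax[OF x y] by (simp add: m_def)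
    then show ?thesis using m1 by (simp add: Qf_def powr_minus_divide powr_divide)
  qed
  finally show "(LINT z:{1..}|lborel. kernT x y z * pareto_dens \<alpha> z) = Qf \<alpha> x y" .
qed

lemma Q_sym: "Qf \<alpha> x y = Qf \<alpha> y x" by (simp add: Qf_def min.commute)

lemma Q_bound: assumes "1 \<le> x" "1 \<le> y" shows "\<bar>Qf \<alpha> x y\<bar> \<le> 1" "0 \<le> Qf \<alpha> x y"
proof -
  have a: "0 < min (x/y) (y/x)" "min (x/y) (y/x) \<le> 1" using minmax(4,3)[OF assms] by auto
  have b: "\<bar>Qf \<alpha> x y\<bar> = Qf \<alpha> x y" "0 \<le> Qf \<alpha> x y" by (simp_all add: Qf_def)
  have "Qf \<alpha> x y \<le> 1" unfolding Qf_def by (rule powr_le1) (use apos a in auto)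
  then show "\<bar>Qf \<alpha> x y\<bar> \<le> 1" "0 \<le> Qf \<alpha> x y" using b by auto
qed

lemma Q_meas: "(\<lambda>(x,y). Qf \<alpha> x y) \<in> borel_measurable (lborel \<Otimes>\<^sub>M lborel)"
  unfolding Qf_def by measurable


lemma A_eq:
  assumes x: "1 \<le> x"
  shows "set_integrable lborel {1..} (\<lambda>y. pareto_dens \<alpha> y * Qf \<alpha> x y)"
    "(LINT y:{1..}|lborel. pareto_dens \<alpha> y * Qf \<alpha> x y) = Af \<alpha> x"
proof -
  let ?f = "\<lambda>y. pareto_dens \<alpha> y * Qf \<alpha> x y"
  have e1: "?f y = \<alpha> * x powr (-\<alpha>) * (1/y)" if "y \<in> {1..x}" for y
  proof -
    have y: "1 \<le> y" "y \<le> x" using that by auto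
    have "y/x \<le> 1" "1 \<le> x/y" using y x by (simp_all add: divide_le_eq_1_pos le_divide_eq_1_pos)
    then have "min (x/y) (y/x) = y/x" by (intro min_absorb2) linarith
    then have "?f y = \<alpha> * y powr (-\<alpha>-1) * (y powr \<alpha> / x powr \<alpha>)"
      using x y by (simp add: Qf_def pareto_dens_def powr_divide)
    also have "\<dots> = \<alpha> * (y powr (-\<alpha>-1) * y powr \<alpha>) / x powr \<alpha>" by simp
    also have "y powr (-\<alpha>-1) * y powr \<alpha> = y powr (-1)" using y by (simp add: powr_add[symmetric])
    finally have "?f y = \<alpha> * y powr (-1) / x powr \<alpha>" .
    then show ?thesis using y by (simp add: powr_minus_divide powr_minus field_simps)
  qed
  have e2: "?f y = x powr \<alpha> * (\<alpha> * y powr (-(2*\<alpha>)-1))" if "y \<in> {x..}" for y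
  proof -
    have y: "1 \<le> y" "x \<le> y" using that x by auto
    have "x/y \<le> 1" "1 \<le> y/x" using y x by (simp_all add: divide_le_eq_1_pos le_divide_eq_1_pos)
    then have "min (x/y) (y/x) = x/y" by (intro min_absorb1) linarith
    then have "?f y = \<alpha> * y powr (-\<alpha>-1) * (x powr \<alpha> / y powr \<alpha>)"
      using x y by (simp add: Qf_def pareto_dens_def powr_divide)
    also have "\<dots> = x powr \<alpha> * (\<alpha> * (y powr (-\<alpha>-1) * y powr (-\<alpha>)))" by (simp add: powr_minus divide_simps)
    also have "y powr (-\<alpha>-1) * y powr (-\<alpha>) = y powr (-(2*\<alpha>)-1)" using y by (simp add: powr_add[symmetric])
    finally show ?thesis .
  qed
  have d: "((\<lambda>y. \<alpha> * x powr (-\<alpha>) * ln y) has_real_derivative \<alpha> * x powr (-\<alpha>) * (1/t)) (at t)"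
    if "1 \<le> t" for t
    using that by (auto intro!: derivative_eq_intros)
  have c: "continuous_on {1..x} (\<lambda>y. \<alpha> * x powr (-\<alpha>) * (1/y))"
    by (intro continuous_intros) auto
  note F = ftc_fin[OF x d c]
  have i1: "set_integrable lborel {1..x} ?f"
  proof -
    have "set_integrable lborel {1..x} ?f = set_integrable lborel {1..x} (\<lambda>y. \<alpha> * x powr (-\<alpha>) * (1/y))"
      by (rule set_integrable_cong) (use e1 in auto)
    then show ?thesis using F(1) by simp
  qed
  have v1: "(LINT y:{1..x}|lborel. ?f y) = \<alpha> * x powr (-\<alpha>) * ln x"
  proof -
    have "(LINT y:{1..x}|lborel. ?f y) = (LINT y:{1..x}|lborel. \<alpha> * x powr (-\<alpha>) * (1/y))"
      by (rule set_lebesgue_integral_cong) (use e1 in auto)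
    then show ?thesis using F(2) by simp
  qed
  have x0: "x > 0" using x by simp
  have i2: "set_integrable lborel {x..} ?f"
  proof -
    have "set_integrable lborel {x..} ?f = set_integrable lborel {x..} (\<lambda>y. x powr \<alpha> * (\<alpha> * y powr (-(2*\<alpha>)-1)))"
      by (rule set_integrable_cong) (use e2 in auto)
    then show ?thesis using ptail2(1)[OF x0] by simp
  qed
  have v2: "(LINT y:{x..}|lborel. ?f y) = x powr (-\<alpha>) / 2"
  proof -
    have "(LINT y:{x..}|lborel. ?f y) = (LINT y:{x..}|lborel. x powr \<alpha> * (\<alpha> * y powr (-(2*\<alpha>)-1)))"
      by (rule set_lebesgue_integral_cong) (use e2 in auto)
    also have "\<dots> = x powr \<alpha> * (x powr (-(2*\<alpha>)) / 2)" using ptail2(2)[OF x0] by simp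
    also have "\<dots> = x powr (-\<alpha>) / 2" using x0 by (simp add: powr_add[symmetric])
    finally show ?thesis .
  qed
  show "set_integrable lborel {1..} ?f" using split_int(1)[OF x i1 i2] .
  show "(LINT y:{1..}|lborel. ?f y) = Af \<alpha> x" using split_int(2)[OF x i1 i2] v1 v2 by (simp add: Af_def)
qed

lemma W_eq:
  assumes x: "1 \<le> x" and z: "1 \<le> z"
  shows "set_integrable lborel {1..} (\<lambda>y. pareto_dens \<alpha> y * kernT x y z)"
    "(LINT y:{1..}|lborel. pareto_dens \<alpha> y * kernT x y z) = Wf \<alpha> x z"
proof -
  define a where "a = max 1 (x/z)"
  define b where "b = x * z"
  have a1: "1 \<le> a" by (simp add: a_def)
  have xz: "x/z \<le> x" using x z by (simp add: divide_le_eq)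
  have "x \<le> x * z" using x z by simp
  then have ab: "a \<le> b" using xz x unfolding a_def b_def by (intro max.boundedI) linarith+
  have k: "pareto_dens \<alpha> y * kernT x y z = indicator {a..b} y * pareto_dens \<alpha> y" if "y \<in> {1..}" for y
  proof -
    have y: "1 \<le> y" using that by simp
    have e1: "(x/y \<le> z) = (x \<le> z * y)" using y by (simp add: pos_divide_le_eq)
    have e2: "(y/x \<le> z) = (y \<le> z * x)" using x by (simp add: pos_divide_le_eq)
    have e3: "(x/z \<le> y) = (x \<le> y * z)" using z by (simp add: pos_divide_le_eq)
    have "(max (x/y) (y/x) \<le> z) = (x/y \<le> z \<and> y/x \<le> z)" by simp
    also have "\<dots> = (a \<le> y \<and> y \<le> b)"
      unfolding e1 e2 a_def b_def max.bounded_iff e3 using y by (auto simp: mult.commute)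
    finally have "(max (x/y) (y/x) \<le> z) = (a \<le> y \<and> y \<le> b)" .
    then show ?thesis by (auto simp: kernT_def indicator_def)
  qed
  have d: "((\<lambda>y. - (y powr (-\<alpha>))) has_real_derivative pareto_dens \<alpha> t) (at t)" if "a \<le> t" for t
  proof -
    have t: "0 < t" using that a1 by simp
    show ?thesis using t
      by (auto intro!: derivative_eq_intros simp: pareto_dens_def)
  qed
  have c: "continuous_on {a..b} (pareto_dens \<alpha>)"
    unfolding pareto_dens_def[abs_def] using a1 by (intro continuous_intros) auto
  note F = ftc_fin[OF ab d c]
  have ii: "set_integrable lborel {1..} (\<lambda>y. indicator {a..b} y * pareto_dens \<alpha> y)"
    using F(1) sub_fin(2)[OF a1] by simp
  show "set_integrable lborel {1..} (\<lambda>y. pareto_dens \<alpha> y * kernT x y z)"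
  proof -
    have "set_integrable lborel {1..} (\<lambda>y. pareto_dens \<alpha> y * kernT x y z) = set_integrable lborel {1..} (\<lambda>y. indicator {a..b} y * pareto_dens \<alpha> y)"
      by (rule set_integrable_cong) (use k in auto)
    then show ?thesis using ii by simp
  qed
  have "(LINT y:{1..}|lborel. pareto_dens \<alpha> y * kernT x y z) = (LINT y:{1..}|lborel. indicator {a..b} y * pareto_dens \<alpha> y)"
    by (rule set_lebesgue_integral_cong) (use k in auto)
  also have "\<dots> = a powr (-\<alpha>) - b powr (-\<alpha>)" using F(2) sub_fin(1)[OF a1] by simp
  finally show "(LINT y:{1..}|lborel. pareto_dens \<alpha> y * kernT x y z) = Wf \<alpha> x z"
    by (simp add: Wf_def a_def b_def)
qed

lemma W_bound:
  assumes x: "1 \<le> x" and z: "1 \<le> z"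
  shows "\<bar>Wf \<alpha> x z\<bar> \<le> 1"
proof -
  define a where "a = max 1 (x/z)"
  define b where "b = x * z"
  have a1: "1 \<le> a" by (simp add: a_def)
  have xz: "x/z \<le> x" using x z by (simp add: divide_le_eq)
  have "x \<le> x * z" using x z by simp
  then have ab: "a \<le> b" using xz x unfolding a_def b_def by (intro max.boundedI) linarith+
  have "b powr (-\<alpha>) \<le> a powr (-\<alpha>)" using a1 ab apos by (intro powr_mono2') auto
  moreover have "a powr (-\<alpha>) \<le> 1" using powr_mono2'[of "-\<alpha>" 1 a] a1 apos by simp
  moreover have "0 \<le> b powr (-\<alpha>)" by simp
  ultimately show ?thesis unfolding Wf_def a_def[symmetric] b_def[symmetric] abs_le_iff by linarith
qed

lemma W_meas: "(\<lambda>(x,z). Wf \<alpha> x z) \<in> borel_measurable (lborel \<Otimes>\<^sub>M lborel)"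
  unfolding Wf_def by measurable

lemma K_meas: "(\<lambda>(y,z). kernT x y z) \<in> borel_measurable (lborel \<Otimes>\<^sub>M lborel)"
  unfolding kernT_def by measurable

lemma C_eq:
  assumes z: "1 \<le> z"
  shows "set_integrable lborel {1..} (\<lambda>x. pareto_dens \<alpha> x * Wf \<alpha> x z)"
    "(LINT x:{1..}|lborel. pareto_dens \<alpha> x * Wf \<alpha> x z) = 1 - z powr (-\<alpha>)"
proof -
  let ?f = "\<lambda>x. pareto_dens \<alpha> x * Wf \<alpha> x z"
  let ?g = "\<lambda>x. \<alpha> * x powr (-(2*\<alpha>)-1)"
  have pw: "x powr (-\<alpha>-1) * x powr (-\<alpha>) = x powr (-(2*\<alpha>)-1)" if "x > 0" for x
    using that by (simp add: powr_add[symmetric])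
  have e1: "?f x = \<alpha> * x powr (-\<alpha>-1) - z powr (-\<alpha>) * ?g x" if "x \<in> {1..z}" for x
  proof -
    have x: "1 \<le> x" "x \<le> z" using that by auto
    have m: "max 1 (x/z) = 1" using x z by (simp add: divide_le_eq_1_pos)
    have "?f x = \<alpha> * x powr (-\<alpha>-1) * (1 - x powr (-\<alpha>) * z powr (-\<alpha>))"
      using x z by (simp add: Wf_def pareto_dens_def m powr_mult)
    also have "\<dots> = \<alpha> * x powr (-\<alpha>-1) - z powr (-\<alpha>) * (\<alpha> * (x powr (-\<alpha>-1) * x powr (-\<alpha>)))"
      by (simp add: algebra_simps)
    finally show ?thesis using pw[of x] x by simp
  qed
  have e2: "?f x = (z powr \<alpha> - z powr (-\<alpha>)) * ?g x" if "x \<in> {z..}" for x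
  proof -
    have x: "1 \<le> x" "z \<le> x" using that z by auto
    have m: "max 1 (x/z) = x/z" using x z by (simp add: le_divide_eq_1_pos)
    have "(x/z) powr (-\<alpha>) = x powr (-\<alpha>) * z powr \<alpha>" using x z
      by (simp add: powr_divide powr_minus divide_simps)
    then have "?f x = \<alpha> * x powr (-\<alpha>-1) * (x powr (-\<alpha>) * z powr \<alpha> - x powr (-\<alpha>) * z powr (-\<alpha>))"
      using x z by (simp add: Wf_def pareto_dens_def m powr_mult)
    also have "\<dots> = (z powr \<alpha> - z powr (-\<alpha>)) * (\<alpha> * (x powr (-\<alpha>-1) * x powr (-\<alpha>)))"
      by (simp add: algebra_simps)
    finally show ?thesis using pw[of x] x by simp
  qed
  define H where "H x = - (x powr (-\<alpha>)) + z powr (-\<alpha>) * (x powr (-(2*\<alpha>)) / 2)" for x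
  have d: "(H has_real_derivative (\<alpha> * t powr (-\<alpha>-1) - z powr (-\<alpha>) * ?g t)) (at t)" if "1 \<le> t" for t
  proof -
    have t: "0 < t" using that by simp
    show ?thesis unfolding H_def using t
      by (auto intro!: derivative_eq_intros simp: algebra_simps)
  qed
  have c: "continuous_on {1..z} (\<lambda>t. \<alpha> * t powr (-\<alpha>-1) - z powr (-\<alpha>) * ?g t)"
    by (intro continuous_intros) auto
  note F = ftc_fin[OF z d c]
  have i1: "set_integrable lborel {1..z} ?f"
  proof -
    have "set_integrable lborel {1..z} ?f = set_integrable lborel {1..z} (\<lambda>t. \<alpha> * t powr (-\<alpha>-1) - z powr (-\<alpha>) * ?g t)"
      by (rule set_integrable_cong) (use e1 in auto)
    then show ?thesis using F(1) by simp
  qed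
  have v1: "(LINT x:{1..z}|lborel. ?f x) = H z - H 1"
  proof -
    have "(LINT x:{1..z}|lborel. ?f x) = (LINT t:{1..z}|lborel. \<alpha> * t powr (-\<alpha>-1) - z powr (-\<alpha>) * ?g t)"
      by (rule set_lebesgue_integral_cong) (use e1 in auto)
    then show ?thesis using F(2) by simp
  qed
  have z0: "z > 0" using z by simp
  have i2: "set_integrable lborel {z..} ?f"
  proof -
    have "set_integrable lborel {z..} ?f = set_integrable lborel {z..} (\<lambda>x. (z powr \<alpha> - z powr (-\<alpha>)) * ?g x)"
      by (rule set_integrable_cong) (use e2 in auto)
    then show ?thesis using ptail2(1)[OF z0] by simp
  qed
  have v2: "(LINT x:{z..}|lborel. ?f x) = (z powr \<alpha> - z powr (-\<alpha>)) * (z powr (-(2*\<alpha>)) / 2)"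
  proof -
    have "(LINT x:{z..}|lborel. ?f x) = (LINT x:{z..}|lborel. (z powr \<alpha> - z powr (-\<alpha>)) * ?g x)"
      by (rule set_lebesgue_integral_cong) (use e2 in auto)
    then show ?thesis using ptail2(2)[OF z0] by simp
  qed
  have zz: "z powr \<alpha> * z powr (-(2*\<alpha>)) = z powr (-\<alpha>)" using z0 by (simp add: powr_add[symmetric])
  show "set_integrable lborel {1..} ?f" using split_int(1)[OF z i1 i2] .
  show "(LINT x:{1..}|lborel. ?f x) = 1 - z powr (-\<alpha>)"
    using split_int(2)[OF z i1 i2] v1 v2 zz by (simp add: H_def algebra_simps, linarith)
qed

lemma p_int: "set_integrable lborel {1..} (pareto_dens \<alpha>)" "(LINT z:{1..}|lborel. pareto_dens \<alpha> z) = 1"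
  using ptail[of 1] by auto

lemma T2gen:
  assumes phi: "set_integrable lborel {1..} \<phi>"
  shows "set_integrable lborel {1..} (\<lambda>x. pareto_dens \<alpha> x * (LINT y:{1..}|lborel. \<phi> y * Qf \<alpha> x y))"
    "(LINT x:{1..}|lborel. pareto_dens \<alpha> x * (LINT y:{1..}|lborel. \<phi> y * Qf \<alpha> x y))
      = (LINT y:{1..}|lborel. \<phi> y * Af \<alpha> y)"
proof -
  note S = swap[OF p_int(1) phi Q_meas Q_bound(1)]
  show "set_integrable lborel {1..} (\<lambda>x. pareto_dens \<alpha> x * (LINT y:{1..}|lborel. \<phi> y * Qf \<alpha> x y))"
    by (rule S(1))
  have "(LINT y:{1..}|lborel. \<phi> y * (LINT x:{1..}|lborel. pareto_dens \<alpha> x * Qf \<alpha> x y))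
      = (LINT y:{1..}|lborel. \<phi> y * Af \<alpha> y)"
  proof (rule set_lebesgue_integral_cong, simp, intro allI impI)
    fix y :: real assume "y \<in> {1..}"
    then have y: "1 \<le> y" by simp
    have "(LINT x:{1..}|lborel. pareto_dens \<alpha> x * Qf \<alpha> x y) = (LINT x:{1..}|lborel. pareto_dens \<alpha> x * Qf \<alpha> y x)"
      by (simp add: Q_sym)
    also have "\<dots> = Af \<alpha> y" by (rule A_eq(2)[OF y])
    finally show "\<phi> y * (LINT x:{1..}|lborel. pareto_dens \<alpha> x * Qf \<alpha> x y) = \<phi> y * Af \<alpha> y" by simp
  qed
  then show "(LINT x:{1..}|lborel. pareto_dens \<alpha> x * (LINT y:{1..}|lborel. \<phi> y * Qf \<alpha> x y))
      = (LINT y:{1..}|lborel. \<phi> y * Af \<alpha> y)" using S(3) by simp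
qed

lemma T3gen:
  assumes phi: "set_integrable lborel {1..} \<phi>"
  shows "\<And>x. 1 \<le> x \<Longrightarrow> set_integrable lborel {1..}
       (\<lambda>y. pareto_dens \<alpha> y * (LINT z:{1..}|lborel. \<phi> z * kernT x y z))"
    "set_integrable lborel {1..} (\<lambda>x. pareto_dens \<alpha> x *
       (LINT y:{1..}|lborel. pareto_dens \<alpha> y * (LINT z:{1..}|lborel. \<phi> z * kernT x y z)))"
    "(LINT x:{1..}|lborel. pareto_dens \<alpha> x *
       (LINT y:{1..}|lborel. pareto_dens \<alpha> y * (LINT z:{1..}|lborel. \<phi> z * kernT x y z)))
     = (LINT z:{1..}|lborel. \<phi> z * (1 - z powr (-\<alpha>)))"
proof -
  have kb: "\<bar>kernT x y z\<bar> \<le> 1" for x y z by (simp add: kernT_def)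
  have inner: "(LINT y:{1..}|lborel. pareto_dens \<alpha> y * (LINT z:{1..}|lborel. \<phi> z * kernT x y z))
     = (LINT z:{1..}|lborel. \<phi> z * Wf \<alpha> x z)" if x: "1 \<le> x" for x
  proof -
    note S = swap[OF p_int(1) phi K_meas[of x] kb]
    have "(LINT z:{1..}|lborel. \<phi> z * (LINT y:{1..}|lborel. pareto_dens \<alpha> y * kernT x y z))
      = (LINT z:{1..}|lborel. \<phi> z * Wf \<alpha> x z)"
      by (rule set_lebesgue_integral_cong) (use W_eq(2)[OF x] in auto)
    then show ?thesis using S(3) by simp
  qed
  show "\<And>x. 1 \<le> x \<Longrightarrow> set_integrable lborel {1..}
       (\<lambda>y. pareto_dens \<alpha> y * (LINT z:{1..}|lborel. \<phi> z * kernT x y z))"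
    using swap(1)[OF p_int(1) phi K_meas kb] by simp
  note S2 = swap[OF p_int(1) phi W_meas W_bound]
  have eq1: "(LINT x:{1..}|lborel. pareto_dens \<alpha> x *
       (LINT y:{1..}|lborel. pareto_dens \<alpha> y * (LINT z:{1..}|lborel. \<phi> z * kernT x y z)))
     = (LINT x:{1..}|lborel. pareto_dens \<alpha> x * (LINT z:{1..}|lborel. \<phi> z * Wf \<alpha> x z))"
    by (rule set_lebesgue_integral_cong) (use inner in auto)
  have "set_integrable lborel {1..} (\<lambda>x. pareto_dens \<alpha> x *
       (LINT y:{1..}|lborel. pareto_dens \<alpha> y * (LINT z:{1..}|lborel. \<phi> z * kernT x y z)))
     = set_integrable lborel {1..} (\<lambda>x. pareto_dens \<alpha> x * (LINT z:{1..}|lborel. \<phi> z * Wf \<alpha> x z))"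
    by (rule set_integrable_cong) (use inner in auto)
  then show "set_integrable lborel {1..} (\<lambda>x. pareto_dens \<alpha> x *
       (LINT y:{1..}|lborel. pareto_dens \<alpha> y * (LINT z:{1..}|lborel. \<phi> z * kernT x y z)))"
    using S2(1) by simp
  have "(LINT z:{1..}|lborel. \<phi> z * (LINT x:{1..}|lborel. pareto_dens \<alpha> x * Wf \<alpha> x z))
     = (LINT z:{1..}|lborel. \<phi> z * (1 - z powr (-\<alpha>)))"
    by (rule set_lebesgue_integral_cong) (use C_eq(2) in auto)
  then show "(LINT x:{1..}|lborel. pareto_dens \<alpha> x *
       (LINT y:{1..}|lborel. pareto_dens \<alpha> y * (LINT z:{1..}|lborel. \<phi> z * kernT x y z)))
     = (LINT z:{1..}|lborel. \<phi> z * (1 - z powr (-\<alpha>)))"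
    using eq1 S2(3) by simp
qed

lemma A_bound: assumes "1 \<le> x" shows "\<bar>Af \<alpha> x\<bar> \<le> 1"
proof -
  have pn: "0 \<le> pareto_dens \<alpha> y" for y using apos by (simp add: pareto_dens_def)
  have "(LINT y:{1..}|lborel. pareto_dens \<alpha> y * Qf \<alpha> x y) \<le> (LINT y:{1..}|lborel. pareto_dens \<alpha> y)"
    by (rule set_integral_mono[OF A_eq(1)[OF assms] p_int(1)])
       (use Q_bound[OF assms] pn in \<open>auto intro: mult_left_le\<close>)
  moreover have "0 \<le> (LINT y:{1..}|lborel. pareto_dens \<alpha> y * Qf \<alpha> x y)"
    unfolding set_lebesgue_integral_def
    by (intro Bochner_Integration.integral_nonneg) (auto simp: indicator_def intro!: mult_nonneg_nonneg pn Q_bound(2)[OF assms])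
  ultimately show ?thesis using A_eq(2)[OF assms] p_int(2) by simp
qed
end

lemma bmult:
  fixes \<phi> c :: "real \<Rightarrow> real"
  assumes phi: "set_integrable lborel {1..} \<phi>" and c: "c \<in> borel_measurable lborel"
    and b: "\<And>x. 1 \<le> x \<Longrightarrow> \<bar>c x\<bar> \<le> B"
  shows "set_integrable lborel {1..} (\<lambda>x. \<phi> x * c x)"
proof (rule set_integrable_bound[where f="\<lambda>x. B * \<phi> x"])
  show "set_integrable lborel {1..} (\<lambda>x. B * \<phi> x)" using phi by simp
  have "(\<lambda>x. indicator {1..} x * \<phi> x) \<in> borel_measurable lborel"
    using phi unfolding set_integrable_def by auto
  then have "(\<lambda>x. (indicator {1..} x * \<phi> x) * c x) \<in> borel_measurable lborel" using c by measurable
  then show "set_borel_measurable lborel {1..} (\<lambda>x. \<phi> x * c x)"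
    unfolding set_borel_measurable_def by (simp add: mult.assoc)
  show "AE x in lborel. x \<in> {1..} \<longrightarrow> norm (\<phi> x * c x) \<le> norm (B * \<phi> x)"
  proof (rule AE_I2, intro impI)
    fix x :: real assume "x \<in> {1..}"
    then have "\<bar>c x\<bar> \<le> B" using b by simp
    then have B: "0 \<le> B" by linarith
    have "\<bar>\<phi> x\<bar> * \<bar>c x\<bar> \<le> \<bar>\<phi> x\<bar> * B" using \<open>\<bar>c x\<bar> \<le> B\<close> by (rule mult_left_mono) simp
    then show "norm (\<phi> x * c x) \<le> norm (B * \<phi> x)"
      using B by (simp add: abs_mult mult.commute)
  qed
qed


theorem lemma2:
  fixes g :: "real \<Rightarrow> real \<Rightarrow> real" and h :: "real \<Rightarrow> real" and \<alpha> \<delta> :: real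
  assumes alpha_pos: "\<alpha> > 0"
    and delta_pos: "\<delta> > 0"
    and density: "\<And>\<theta>. \<bar>\<theta>\<bar> < \<delta> \<Longrightarrow>
        (\<forall>x\<ge>1. g \<theta> x \<ge> 0) \<and> set_integrable lborel {1..} (g \<theta>)
        \<and> (LINT x:{1..}|lborel. g \<theta> x) = 1"
    and g0: "\<And>x. x \<ge> 1 \<Longrightarrow> g 0 x = pareto_dens \<alpha> x"
    and h_deriv: "\<And>x. x \<ge> 1 \<Longrightarrow> ((\<lambda>\<theta>. g \<theta> x) has_real_derivative h x) (at 0)"
    and h_int: "set_integrable lborel {1..} h"
    and diff_norm: "((\<lambda>\<theta>. LINT x:{1..}|lborel. g \<theta> x)
        has_real_derivative (LINT x:{1..}|lborel. h x)) (at 0)"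
    and diff_bT: "(bT g has_real_derivative
        (LINT x:{1..}|lborel. LINT y:{1..}|lborel. LINT z:{1..}|lborel.
           kernT x y z * (h x * g 0 y * g 0 z + g 0 x * h y * g 0 z + g 0 x * g 0 y * h z))) (at 0)"
  shows "(\<lambda>\<theta>. bT g \<theta> - 3 * \<theta> * (LINT x:{1..}|lborel. upsilon \<alpha> x * h x))
           \<in> o[at 0](\<lambda>\<theta>. \<theta>)"
proof -
  let ?p = "pareto_dens \<alpha>"
  note pI = p_int[OF alpha_pos]
  have N1: "\<forall>\<^sub>F \<theta> in nhds 0. (LINT x:{1..}|lborel. g \<theta> x) = 1"
    unfolding eventually_nhds_metric
    by (intro exI[of _ \<delta>]) (use delta_pos density in \<open>auto simp: dist_real_def\<close>)
  have "((\<lambda>\<theta>. 1::real) has_real_derivative (LINT x:{1..}|lborel. h x)) (at 0)"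
    using diff_norm DERIV_cong_ev[OF refl N1 refl] by simp
  then have hint0: "(LINT x:{1..}|lborel. h x) = 0"
    using DERIV_const DERIV_unique by blast
  have lev_z0: "(LINT z:{1..}|lborel. kernT x y z * g 0 x * g 0 y * g 0 z)
      = ?p x * (?p y * (LINT z:{1..}|lborel. ?p z * kernT x y z))" if "1 \<le> x" "1 \<le> y" for x y
  proof -
    have "(LINT z:{1..}|lborel. kernT x y z * g 0 x * g 0 y * g 0 z)
      = (LINT z:{1..}|lborel. ?p x * ?p y * (?p z * kernT x y z))"
      by (rule set_lebesgue_integral_cong) (use that g0 in auto)
    then show ?thesis by simp
  qed
  have lev_y0: "(LINT y:{1..}|lborel. LINT z:{1..}|lborel. kernT x y z * g 0 x * g 0 y * g 0 z)
      = ?p x * (LINT y:{1..}|lborel. ?p y * (LINT z:{1..}|lborel. ?p z * kernT x y z))" if "1 \<le> x" for x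
  proof -
    have "(LINT y:{1..}|lborel. LINT z:{1..}|lborel. kernT x y z * g 0 x * g 0 y * g 0 z)
      = (LINT y:{1..}|lborel. ?p x * (?p y * (LINT z:{1..}|lborel. ?p z * kernT x y z)))"
      by (rule set_lebesgue_integral_cong) (use that lev_z0 in auto)
    then show ?thesis by simp
  qed
  have pz: "?p z * (1 - z powr (-\<alpha>)) = ?p z - \<alpha> * z powr (-(2*\<alpha>)-1)" if "1 \<le> z" for z
  proof -
    have "z powr (-\<alpha>-1) * z powr (-\<alpha>) = z powr (-(2*\<alpha>)-1)" using that by (simp add: powr_add[symmetric])
    then show ?thesis by (simp add: pareto_dens_def algebra_simps)
  qed
  have half: "(LINT z:{1..}|lborel. ?p z * (1 - z powr (-\<alpha>))) = 1/2"
  proof -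
    have "(LINT z:{1..}|lborel. ?p z * (1 - z powr (-\<alpha>))) = (LINT z:{1..}|lborel. ?p z - \<alpha> * z powr (-(2*\<alpha>)-1))"
      by (rule set_lebesgue_integral_cong) (use pz in auto)
    also have "\<dots> = (LINT z:{1..}|lborel. ?p z) - (LINT z:{1..}|lborel. \<alpha> * z powr (-(2*\<alpha>)-1))"
      by (rule set_integral_diff) (use pI ptail2[OF alpha_pos, of 1] in auto)
    also have "\<dots> = 1/2" using pI ptail2[OF alpha_pos, of 1] by simp
    finally show ?thesis .
  qed
  have bT0: "bT g 0 = 0"
  proof -
    have "bT g 0 = (LINT x:{1..}|lborel. ?p x * (LINT y:{1..}|lborel. ?p y * (LINT z:{1..}|lborel. ?p z * kernT x y z))) - 1/2"
    proof -
      have "(LINT x:{1..}|lborel. LINT y:{1..}|lborel. LINT z:{1..}|lborel. kernT x y z * g 0 x * g 0 y * g 0 z)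
        = (LINT x:{1..}|lborel. ?p x * (LINT y:{1..}|lborel. ?p y * (LINT z:{1..}|lborel. ?p z * kernT x y z)))"
        by (rule set_lebesgue_integral_cong) (use lev_y0 in auto)
      then show ?thesis by (simp add: bT_def)
    qed
    also have "\<dots> = 0" using T3gen(3)[OF alpha_pos pI(1)] half by simp
    finally show ?thesis .
  qed
  define Hk where "Hk x y = (LINT z:{1..}|lborel. h z * kernT x y z)" for x y
  have kmeas: "kernT x y \<in> borel_measurable lborel" for x y unfolding kernT_def[abs_def] by measurable
  have kb: "\<bar>kernT x y z\<bar> \<le> 1" for x y z by (simp add: kernT_def)
  have lev_z: "(LINT z:{1..}|lborel. kernT x y z * (h x * g 0 y * g 0 z + g 0 x * h y * g 0 z + g 0 x * g 0 y * h z))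
     = (h x * ?p y + ?p x * h y) * Qf \<alpha> x y + ?p x * ?p y * Hk x y" if x: "1 \<le> x" and y: "1 \<le> y" for x y
  proof -
    have "(LINT z:{1..}|lborel. kernT x y z * (h x * g 0 y * g 0 z + g 0 x * h y * g 0 z + g 0 x * g 0 y * h z))
      = (LINT z:{1..}|lborel. (h x * ?p y + ?p x * h y) * (kernT x y z * ?p z) + ?p x * ?p y * (h z * kernT x y z))"
      by (rule set_lebesgue_integral_cong) (use x y g0 in \<open>auto simp: algebra_simps\<close>)
    also have "\<dots> = (LINT z:{1..}|lborel. (h x * ?p y + ?p x * h y) * (kernT x y z * ?p z))
        + (LINT z:{1..}|lborel. ?p x * ?p y * (h z * kernT x y z))"
      by (rule set_integral_add) (use Q_eq(1)[OF alpha_pos x y] bmult[OF h_int kmeas kb] in auto)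
    also have "\<dots> = (h x * ?p y + ?p x * h y) * Qf \<alpha> x y + ?p x * ?p y * Hk x y"
      using Q_eq(2)[OF alpha_pos x y] by (simp add: Hk_def)
    finally show ?thesis .
  qed
  have lev_y: "(LINT y:{1..}|lborel. LINT z:{1..}|lborel. kernT x y z * (h x * g 0 y * g 0 z + g 0 x * h y * g 0 z + g 0 x * g 0 y * h z))
     = h x * Af \<alpha> x + ?p x * (LINT y:{1..}|lborel. h y * Qf \<alpha> x y) + ?p x * (LINT y:{1..}|lborel. ?p y * Hk x y)"
    if x: "1 \<le> x" for x
  proof -
    have qm: "Qf \<alpha> x \<in> borel_measurable lborel" unfolding Qf_def[abs_def] by measurable
    have i1: "set_integrable lborel {1..} (\<lambda>y. h x * (?p y * Qf \<alpha> x y))" using A_eq(1)[OF alpha_pos x] by simp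
    have i2: "set_integrable lborel {1..} (\<lambda>y. ?p x * (h y * Qf \<alpha> x y))"
      using bmult[OF h_int qm Q_bound(1)[OF alpha_pos x]] by simp
    have i3: "set_integrable lborel {1..} (\<lambda>y. ?p x * (?p y * Hk x y))"
      using T3gen(1)[OF alpha_pos h_int x] by (simp add: Hk_def)
    have "(LINT y:{1..}|lborel. LINT z:{1..}|lborel. kernT x y z * (h x * g 0 y * g 0 z + g 0 x * h y * g 0 z + g 0 x * g 0 y * h z))
      = (LINT y:{1..}|lborel. h x * (?p y * Qf \<alpha> x y) + ?p x * (h y * Qf \<alpha> x y) + ?p x * (?p y * Hk x y))"
    proof (rule set_lebesgue_integral_cong, simp, intro allI impI)
      fix y :: real assume "y \<in> {1..}"
      then have y: "1 \<le> y" by simp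
      have "(LINT z:{1..}|lborel. kernT x y z * (h x * g 0 y * g 0 z + g 0 x * h y * g 0 z + g 0 x * g 0 y * h z))
        = (h x * ?p y + ?p x * h y) * Qf \<alpha> x y + ?p x * ?p y * Hk x y" by (rule lev_z[OF x y])
      also have "\<dots> = h x * (?p y * Qf \<alpha> x y) + ?p x * (h y * Qf \<alpha> x y) + ?p x * (?p y * Hk x y)"
        by (simp add: algebra_simps)
      finally show "(LINT z:{1..}|lborel. kernT x y z * (h x * g 0 y * g 0 z + g 0 x * h y * g 0 z + g 0 x * g 0 y * h z))
        = h x * (?p y * Qf \<alpha> x y) + ?p x * (h y * Qf \<alpha> x y) + ?p x * (?p y * Hk x y)" .
    qed
    also have "\<dots> = (LINT y:{1..}|lborel. h x * (?p y * Qf \<alpha> x y) + ?p x * (h y * Qf \<alpha> x y))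
        + (LINT y:{1..}|lborel. ?p x * (?p y * Hk x y))"
      by (rule set_integral_add) (use i1 i2 i3 in auto)
    also have "(LINT y:{1..}|lborel. h x * (?p y * Qf \<alpha> x y) + ?p x * (h y * Qf \<alpha> x y))
        = (LINT y:{1..}|lborel. h x * (?p y * Qf \<alpha> x y)) + (LINT y:{1..}|lborel. ?p x * (h y * Qf \<alpha> x y))"
      by (rule set_integral_add) (use i1 i2 in auto)
    finally show ?thesis using A_eq(2)[OF alpha_pos x] by simp
  qed
  have am: "Af \<alpha> \<in> borel_measurable lborel" unfolding Af_def[abs_def] by measurable
  have j1: "set_integrable lborel {1..} (\<lambda>x. h x * Af \<alpha> x)"
    by (rule bmult[OF h_int am A_bound[OF alpha_pos]])
  have j2: "set_integrable lborel {1..} (\<lambda>x. ?p x * (LINT y:{1..}|lborel. h y * Qf \<alpha> x y))"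
    by (rule T2gen(1)[OF alpha_pos h_int])
  have j3: "set_integrable lborel {1..} (\<lambda>x. ?p x * (LINT y:{1..}|lborel. ?p y * Hk x y))"
    using T3gen(2)[OF alpha_pos h_int] by (simp add: Hk_def)
  define D where "D = (LINT x:{1..}|lborel. LINT y:{1..}|lborel. LINT z:{1..}|lborel.
           kernT x y z * (h x * g 0 y * g 0 z + g 0 x * h y * g 0 z + g 0 x * g 0 y * h z))"
  have D1: "D = 2 * (LINT x:{1..}|lborel. h x * Af \<alpha> x) + (LINT z:{1..}|lborel. h z * (1 - z powr (-\<alpha>)))"
  proof -
    have "D = (LINT x:{1..}|lborel. h x * Af \<alpha> x + ?p x * (LINT y:{1..}|lborel. h y * Qf \<alpha> x y)
        + ?p x * (LINT y:{1..}|lborel. ?p y * Hk x y))"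
      unfolding D_def by (rule set_lebesgue_integral_cong) (use lev_y in auto)
    also have "\<dots> = (LINT x:{1..}|lborel. h x * Af \<alpha> x + ?p x * (LINT y:{1..}|lborel. h y * Qf \<alpha> x y))
        + (LINT x:{1..}|lborel. ?p x * (LINT y:{1..}|lborel. ?p y * Hk x y))"
      by (rule set_integral_add) (use j1 j2 j3 in auto)
    also have "(LINT x:{1..}|lborel. h x * Af \<alpha> x + ?p x * (LINT y:{1..}|lborel. h y * Qf \<alpha> x y))
        = (LINT x:{1..}|lborel. h x * Af \<alpha> x) + (LINT x:{1..}|lborel. ?p x * (LINT y:{1..}|lborel. h y * Qf \<alpha> x y))"
      by (rule set_integral_add) (use j1 j2 in auto)
    also have "(LINT x:{1..}|lborel. ?p x * (LINT y:{1..}|lborel. h y * Qf \<alpha> x y)) = (LINT x:{1..}|lborel. h x * Af \<alpha> x)"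
      by (rule T2gen(2)[OF alpha_pos h_int])
    also have "(LINT x:{1..}|lborel. ?p x * (LINT y:{1..}|lborel. ?p y * Hk x y)) = (LINT z:{1..}|lborel. h z * (1 - z powr (-\<alpha>)))"
      using T3gen(3)[OF alpha_pos h_int] by (simp add: Hk_def)
    finally show ?thesis by simp
  qed
  have cm: "(\<lambda>x::real. 1 - x powr (-\<alpha>)) \<in> borel_measurable lborel" by measurable
  have cb: "\<bar>1 - x powr (-\<alpha>)\<bar> \<le> 1" if "1 \<le> x" for x
  proof -
    have "x powr (-\<alpha>) \<le> 1" using powr_mono2'[of "-\<alpha>" 1 x] that alpha_pos by simp
    moreover have "0 \<le> x powr (-\<alpha>)" by simp
    ultimately show ?thesis by (simp add: abs_le_iff)
  qed
  have j4: "set_integrable lborel {1..} (\<lambda>x. h x * (1 - x powr (-\<alpha>)))" by (rule bmult[OF h_int cm cb])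
  have ups: "upsilon \<alpha> x * h x = 2/3 * (h x * Af \<alpha> x) + 1/3 * (h x * (1 - x powr (-\<alpha>))) - 1/2 * h x"
    if "1 \<le> x" for x
  proof -
    have "x powr (-\<alpha>) = 1 / x powr \<alpha>" by (simp add: powr_minus_divide)
    moreover have "x powr \<alpha> > 0" using that by simp
    ultimately show ?thesis by (simp add: upsilon_def Af_def field_simps)
  qed
  have U: "3 * (LINT x:{1..}|lborel. upsilon \<alpha> x * h x) = D"
  proof -
    have "(LINT x:{1..}|lborel. upsilon \<alpha> x * h x)
      = (LINT x:{1..}|lborel. 2/3 * (h x * Af \<alpha> x) + 1/3 * (h x * (1 - x powr (-\<alpha>))) - 1/2 * h x)"
      by (rule set_lebesgue_integral_cong) (use ups in auto)
    also have "\<dots> = (LINT x:{1..}|lborel. 2/3 * (h x * Af \<alpha> x) + 1/3 * (h x * (1 - x powr (-\<alpha>))))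
         - (LINT x:{1..}|lborel. 1/2 * h x)"
      by (rule set_integral_diff) (use j1 j4 h_int in auto)
    also have "(LINT x:{1..}|lborel. 2/3 * (h x * Af \<alpha> x) + 1/3 * (h x * (1 - x powr (-\<alpha>))))
      = (LINT x:{1..}|lborel. 2/3 * (h x * Af \<alpha> x)) + (LINT x:{1..}|lborel. 1/3 * (h x * (1 - x powr (-\<alpha>))))"
      by (rule set_integral_add) (use j1 j4 in auto)
    finally show ?thesis using D1 hint0 by simp
  qed
  have dD: "(bT g has_real_derivative D) (at 0)" using diff_bT unfolding D_def .
  then have lim: "((\<lambda>t. (bT g (0 + t) - bT g 0) / t) \<longlongrightarrow> D) (at 0)" by (simp add: DERIV_def)
  have lim2: "((\<lambda>t. (bT g t - 3 * t * (LINT x:{1..}|lborel. upsilon \<alpha> x * h x)) / t) \<longlongrightarrow> 0) (at 0)"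
  proof -
    have "((\<lambda>t. (bT g (0 + t) - bT g 0) / t - D) \<longlongrightarrow> D - D) (at 0)"
      by (intro tendsto_diff lim tendsto_const)
    moreover have "\<forall>\<^sub>F t in at 0. (bT g (0 + t) - bT g 0) / t - D
        = (bT g t - 3 * t * (LINT x:{1..}|lborel. upsilon \<alpha> x * h x)) / t"
      unfolding eventually_at_filter
      by (rule always_eventually) (auto simp: bT0 U[symmetric] field_simps)
    ultimately show ?thesis by (auto elim: Lim_transform_eventually)
  qed
  show ?thesis
  proof (rule smalloI_tendsto[OF lim2])
    show "\<forall>\<^sub>F t in at (0::real). t \<noteq> 0" by (rule eventually_at_filter[THEN iffD2]) simp
  qed
qed

end
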